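(* Consider the two-link parallel network with unit demand and latencies $\ell_1(x_1)=x_1^2$ and $\ell_2(x_2)=0$. Then there is no uncapped subgame perfect Nash equilibrium, i.e. $\mathcal{T}(\infty)=\emptyset$, and moreover $\mathcal{T}(c)=\emptyset$ for every price cap $c\ge\frac12$.
   Context: Flows $x\in\mathbb{R}^2_+$ with $x_1+x_2=1$. For tolls $t\in\mathbb{R}^2_+$, $x(t)$ is the unique Wardrop equilibrium for $t$ (for all $i,j$ with $x_i>0$: $\ell_i(x_i)+t_i\le\ell_j(x_j)+t_j$). Profit $\Pi_i(t)=t_ix_i(t)$. For $c\in\mathbb{R}_+$, $\mathcal{T}(c)$ is the set of toll vectors with $0\le t_i\le c$ such that for every $i$ and every $t'_i\in[0,c]$, $\Pi_i(t_i,t_{-i})\ge\Pi_i(t'_i,t_{-i})$ (flow recomputed); $\mathcal{T}(\infty)$ is the same without upper bound. *)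

theory Defs
  imports Complex_Main
begin

datatype link = L1 | L2

definition feasible :: "(link \<Rightarrow> real) \<Rightarrow> bool" where
  "feasible x \<longleftrightarrow> (\<forall>i. x i \<ge> 0) \<and> x L1 + x L2 = 1"

definition wardrop :: "(link \<Rightarrow> real \<Rightarrow> real) \<Rightarrow> (link \<Rightarrow> real) \<Rightarrow> (link \<Rightarrow> real) \<Rightarrow> bool" where
  "wardrop l t x \<longleftrightarrow> feasible x \<and>
     (\<forall>i j. x i > 0 \<longrightarrow> l i (x i) + t i \<le> l j (x j) + t j)"

text \<open>The (unique) Wardrop equilibrium flow x(t).\<close>
definition eqflow :: "(link \<Rightarrow> real \<Rightarrow> real) \<Rightarrow> (link \<Rightarrow> real) \<Rightarrow> (link \<Rightarrow> real)" where
  "eqflow l t = (THE x. wardrop l t x)"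

definition profit :: "(link \<Rightarrow> real \<Rightarrow> real) \<Rightarrow> link \<Rightarrow> (link \<Rightarrow> real) \<Rightarrow> real" where
  "profit l i t = t i * eqflow l t i"

definition tollNE :: "(link \<Rightarrow> real \<Rightarrow> real) \<Rightarrow> real set \<Rightarrow> (link \<Rightarrow> real) set" where
  "tollNE l S = {t. (\<forall>i. t i \<in> S) \<and>
      (\<forall>i t'. t' \<in> S \<longrightarrow> profit l i t \<ge> profit l i (t(i := t')))}"

definition Tcap :: "(link \<Rightarrow> real \<Rightarrow> real) \<Rightarrow> real \<Rightarrow> (link \<Rightarrow> real) set" where
  "Tcap l c = tollNE l {0..c}"

definition Tinf :: "(link \<Rightarrow> real \<Rightarrow> real) \<Rightarrow> (link \<Rightarrow> real) set" where
  "Tinf l = tollNE l {0..}"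

end

theory Submission
  imports Defs
begin

definition lq :: "link \<Rightarrow> real \<Rightarrow> real" where
  "lq = (\<lambda>i z. if i = L1 then z ^ 2 else 0)"

definition AA :: "real \<Rightarrow> real \<Rightarrow> real" where
  "AA t1 t2 = min 1 (sqrt (max 0 (t2 - t1)))"

definition fl :: "(link \<Rightarrow> real) \<Rightarrow> link \<Rightarrow> real" where
  "fl t = (\<lambda>i. if i = L1 then AA (t L1) (t L2) else 1 - AA (t L1) (t L2))"

lemma link_all: "(\<forall>i. P i) \<longleftrightarrow> P L1 \<and> P L2"
  by (metis link.exhaust)

lemma AA_bounds: "0 \<le> AA a b" "AA a b \<le> 1"
  by (auto simp: AA_def)

lemma fl_wardrop: "wardrop lq t (fl t)"
proof -
  let ?a = "AA (t L1) (t L2)"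
  have c1: "?a > 0 \<Longrightarrow> ?a^2 + t L1 \<le> t L2"
  proof -
    assume "?a > 0"
    hence "t L2 - t L1 > 0" by (auto simp: AA_def)
    moreover have "?a \<le> sqrt (t L2 - t L1)" using \<open>t L2 - t L1 > 0\<close> by (auto simp: AA_def)
    ultimately have "?a^2 \<le> (sqrt (t L2 - t L1))^2"
      using AA_bounds by (intro power_mono) auto
    thus ?thesis using \<open>t L2 - t L1 > 0\<close> by simp
  qed
  have c2: "1 - ?a > 0 \<Longrightarrow> t L2 \<le> ?a^2 + t L1"
  proof -
    assume "1 - ?a > 0"
    show ?thesis
    proof (cases "t L2 - t L1 \<le> 0")
      case True thus ?thesis by (simp add: add_increasing)
    next
      case False
      hence "?a = sqrt (t L2 - t L1)" using \<open>1 - ?a > 0\<close> by (auto simp: AA_def min_def split: if_splits)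
      thus ?thesis using False by simp
    qed
  qed
  have b: "0 \<le> ?a" "?a \<le> 1" by (rule AA_bounds)+
  show ?thesis
    unfolding wardrop_def feasible_def link_all
    using c1 c2 b by (simp add: fl_def lq_def)
qed

lemma wardrop_unique:
  assumes "wardrop lq t x" shows "x = fl t"
proof -
  let ?a = "x L1"
  have f: "x L2 = 1 - ?a" "?a \<ge> 0" "?a \<le> 1"
    using assms by (auto simp: wardrop_def feasible_def link_all)
  have c1: "?a > 0 \<Longrightarrow> ?a^2 + t L1 \<le> t L2"
    using assms unfolding wardrop_def lq_def by (auto simp: link_all)
  have c2: "1 - ?a > 0 \<Longrightarrow> t L2 \<le> ?a^2 + t L1"
    using assms f unfolding wardrop_def lq_def by (auto simp: link_all)
  have "?a = AA (t L1) (t L2)"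
  proof (cases "?a = 0")
    case True
    with c2 have "t L2 \<le> t L1" by simp
    thus ?thesis using True by (simp add: AA_def)
  next
    case False
    hence pos: "?a > 0" using f by simp
    show ?thesis
    proof (cases "?a = 1")
      case True
      with c1 have "t L2 - t L1 \<ge> 1" by simp
      hence "sqrt (t L2 - t L1) \<ge> 1" by simp
      thus ?thesis using True by (simp add: AA_def)
    next
      case False
      hence "1 - ?a > 0" using f by simp
      with c1 c2 pos have "t L2 - t L1 = ?a^2" by fastforce
      thus ?thesis using f False pos by (simp add: AA_def)
    qed
  qed
  thus ?thesis unfolding fl_def using f by (metis link.exhaust)
qed

lemma eqflow_lq: "eqflow lq t = fl t"
  unfolding eqflow_def using fl_wardrop wardrop_unique by blast

lemma profit1: "profit lq L1 t = t L1 * AA (t L1) (t L2)"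
  by (simp add: profit_def eqflow_lq fl_def)

lemma profit2: "profit lq L2 t = t L2 * (1 - AA (t L1) (t L2))"
  by (simp add: profit_def eqflow_lq fl_def)

lemma AA_sq: "0 < y \<Longrightarrow> y \<le> 1 \<Longrightarrow> t2 - t1 = y^2 \<Longrightarrow> AA t1 t2 = y"
  by (simp add: AA_def)

lemma noNE:
  assumes S0: "\<forall>x\<in>S. x \<ge> 0" and half: "{0..1/2} \<subseteq> S" and down: "\<forall>x\<in>S. {0..x} \<subseteq> S"
  shows "tollNE lq S = {}"
proof (rule ccontr)
  assume "tollNE lq S \<noteq> {}"
  then obtain t where t: "t \<in> tollNE lq S" by blast
  define t1 where "t1 = t L1"
  define t2 where "t2 = t L2"
  have inS: "t1 \<in> S" "t2 \<in> S" using t by (auto simp: tollNE_def t1_def t2_def)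
  have t1p: "t1 \<ge> 0" and t2p: "t2 \<ge> 0" using inS S0 by auto
  have NE1: "\<And>s. s \<in> S \<Longrightarrow> s * AA s t2 \<le> t1 * AA t1 t2"
  proof -
    fix s assume "s \<in> S"
    with t have "profit lq L1 (t(L1 := s)) \<le> profit lq L1 t" by (auto simp: tollNE_def)
    thus "s * AA s t2 \<le> t1 * AA t1 t2" by (simp add: profit1 t1_def t2_def)
  qed
  have NE2: "\<And>u. u \<in> S \<Longrightarrow> u * (1 - AA t1 u) \<le> t2 * (1 - AA t1 t2)"
  proof -
    fix u assume "u \<in> S"
    with t have "profit lq L2 (t(L2 := u)) \<le> profit lq L2 t" by (auto simp: tollNE_def)
    thus "u * (1 - AA t1 u) \<le> t2 * (1 - AA t1 t2)" by (simp add: profit2 t1_def t2_def)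
  qed
  have downI: "\<And>x y. x \<in> S \<Longrightarrow> 0 \<le> y \<Longrightarrow> y \<le> x \<Longrightarrow> y \<in> S" using down by (meson atLeastAtMost_iff subsetD)
  have q: "1/4 \<in> S" using half by auto
  have AAq: "AA 0 (1/4) = 1/2" by (rule AA_sq) (auto simp: power2_eq_square)
  show False
  proof (cases "t2 \<le> t1")
    case True
    hence A0: "AA t1 t2 = 0" by (simp add: AA_def)
    show ?thesis
    proof (cases "t2 > 0")
      case True
      have "t2/2 \<in> S" using downI[OF inS(2)] True by auto
      moreover have "AA (t2/2) t2 > 0" using True by (simp add: AA_def)
      moreover have "(t2/2) * AA (t2/2) t2 > 0" using calculation(2) True by (intro mult_pos_pos) auto
      ultimately show ?thesis using NE1[of "t2/2"] A0 by simp
    next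
      case False
      hence z: "t2 = 0" using t2p by simp
      show ?thesis
      proof (cases "t1 > 0")
        case True
        have "AA t1 t1 = 0" by (simp add: AA_def)
        thus ?thesis using NE2[OF inS(1)] True z by simp
      next
        case False
        hence "t1 = 0" using t1p by simp
        thus ?thesis using NE2[OF q] z AAq by simp
      qed
    qed
  next
    case False
    hence d: "t2 - t1 > 0" by simp
    show ?thesis
    proof (cases "t2 - t1 \<ge> 1")
      case True
      hence A1: "AA t1 t2 = 1" by (simp add: AA_def)
      show ?thesis
      proof (cases "t1 > 0")
        case True
        have "AA t1 t1 = 0" by (simp add: AA_def)
        thus ?thesis using NE2[OF inS(1)] True A1 by simp
      next
        case False
        hence "t1 = 0" using t1p by simp
        thus ?thesis using NE2[OF q] A1 AAq by simp
      qed
    next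
      case False
      define r where "r = sqrt (t2 - t1)"
      have r0: "r > 0" using d by (simp add: r_def)
      have r1: "r < 1" using False d by (simp add: r_def)
      have rsq: "r^2 = t2 - t1" using d by (simp add: r_def)
      have Ar: "AA t1 t2 = r" using r0 r1 rsq by (intro AA_sq) auto
      have "AA t1 t1 = 0" by (simp add: AA_def)
      hence "t1 \<le> t2 * (1 - r)" using NE2[OF inS(1)] Ar by simp
      hence "r * r \<ge> r * t2" using rsq by (simp add: power2_eq_square algebra_simps)
      hence rt2: "t2 \<le> r" using r0 by simp
      have t1pos: "t1 > 0"
      proof (rule ccontr)
        assume "\<not> t1 > 0"
        hence z: "t1 = 0" using t1p by simp
        have "t2/2 \<in> S" using downI[OF inS(2)] d z by auto
        moreover have "AA (t2/2) t2 > 0" using d z by (simp add: AA_def)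
        moreover have "(t2/2) * AA (t2/2) t2 > 0" using calculation(2) d z by (intro mult_pos_pos) auto
        ultimately show False using NE1[of "t2/2"] z by simp
      qed
      have rlt: "r < sqrt t2"
      proof -
        have "sqrt (r^2) < sqrt t2" using t1pos rsq by simp
        thus ?thesis using r0 by simp
      qed
      have t2lt1: "sqrt t2 < 1" using rt2 r1 by simp
      (* owner 1 FOC *)
      define F where "F = (\<lambda>y::real. (t2 - y^2) * y)"
      have "t2 - 3 * r^2 = 0"
      proof (rule DERIV_local_max)
        show "DERIV F r :> t2 - 3 * r^2"
          unfolding F_def by (auto intro!: derivative_eq_intros simp: power2_eq_square algebra_simps)
        show "0 < min r (sqrt t2 - r)" using r0 rlt by simp
        show "\<forall>y. \<bar>r - y\<bar> < min r (sqrt t2 - r) \<longrightarrow> F y \<le> F r"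
        proof (intro allI impI)
          fix y assume y: "\<bar>r - y\<bar> < min r (sqrt t2 - r)"
          hence y0: "y > 0" and y1: "y < sqrt t2" by auto
          have "y^2 < (sqrt t2)^2" using y0 y1 by (intro power_strict_mono) auto
          hence ysq: "y^2 < t2" using t2p by simp
          have yle: "y \<le> 1" using y1 t2lt1 by linarith
          have "t2 - y^2 \<in> S" using downI[OF inS(2)] ysq by auto
          moreover have "AA (t2 - y^2) t2 = y" using y0 yle by (intro AA_sq) auto
          ultimately have "(t2 - y^2) * y \<le> t1 * r" using NE1[of "t2 - y^2"] Ar by simp
          thus "F y \<le> F r" using rsq by (simp add: F_def)
        qed
      qed
      hence t2e: "t2 = 3 * r^2" by simp
      have r3: "r \<le> 1/3" using rt2 t2e r0 by (simp add: power2_eq_square)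
      have t1e: "t1 = 2 * r^2" using t2e rsq by simp
      define G where "G = (\<lambda>p::real. (t1 + p^2) * (1 - p))"
      have "2 * r * (1 - r) - (t1 + r^2) = 0"
      proof (rule DERIV_local_max)
        show "DERIV G r :> 2 * r * (1 - r) - (t1 + r^2)"
          unfolding G_def by (auto intro!: derivative_eq_intros simp: power2_eq_square algebra_simps)
        show "0 < min r (1/10)" using r0 by simp
        show "\<forall>p. \<bar>r - p\<bar> < min r (1/10) \<longrightarrow> G p \<le> G r"
        proof (intro allI impI)
          fix p assume p: "\<bar>r - p\<bar> < min r (1/10)"
          hence p0: "p > 0" and p1: "p < 13/30" using r3 by (auto simp: abs_if split: if_splits)
          have "p^2 < (13/30)^2" using p0 p1 by (intro power_strict_mono) auto
          moreover have "t1 \<le> 2/9"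
          proof -
            have "r^2 \<le> (1/3)^2" using r3 r0 by (intro power_mono) auto
            thus ?thesis using t1e by (simp add: power2_eq_square)
          qed
          ultimately have "t1 + p^2 \<le> 1/2" by (simp add: power2_eq_square)
          hence "t1 + p^2 \<in> S" using half t1p by auto
          moreover have "AA t1 (t1 + p^2) = p" using p0 p1 by (intro AA_sq) auto
          ultimately have "(t1 + p^2) * (1 - p) \<le> t2 * (1 - r)" using NE2[of "t1 + p^2"] Ar by simp
          thus "G p \<le> G r" using rsq by (simp add: G_def)
        qed
      qed
      hence "2 * r - 5 * r^2 = 0" using t1e by (simp add: algebra_simps power2_eq_square)
      hence "r * (2 - 5 * r) = 0" by (simp add: algebra_simps power2_eq_square)
      hence "r = 2/5" using r0 by simp
      thus False using r3 by simp
    qed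
  qed
qed

theorem mainTheorem15:
  fixes l :: "link \<Rightarrow> real \<Rightarrow> real"
  assumes "l = (\<lambda>i z. if i = L1 then z ^ 2 else 0)"
  shows "Tinf l = {} \<and> (\<forall>c::real. c \<ge> 1/2 \<longrightarrow> Tcap l c = {})"
proof -
  have l: "l = lq" using assms by (simp add: lq_def)
  have "Tinf l = {}" unfolding Tinf_def l by (rule noNE) auto
  moreover have "Tcap l c = {}" if "c \<ge> 1/2" for c
    unfolding Tcap_def l by (rule noNE) (use that in auto)
  ultimately show ?thesis by blast
qed

end
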